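(* Let $\Omega\subset\mathbb{R}^3$ be open, $T>0$, and let $A:[0,T]\times\Omega\to\mathbb{T}$ and $\gamma:[0,T]\times\Omega\to\mathbb{S}$ be sufficiently smooth (classical) fields solving $$\operatorname{div} A=0,\qquad A_t+\operatorname{curl} S\gamma=0,\qquad S\gamma_t-\operatorname{sym}\operatorname{curl} A=0,\qquad \operatorname{div}\operatorname{div} S\gamma=0,$$ with initial conditions $A(0)=A_0$, $\gamma(0)=\gamma_0$. Define the gauge functions $$\alpha:=\tfrac12\operatorname{tr}\gamma,\qquad \beta(t):=\tfrac12\int_0^t \operatorname{div} S\gamma(s)\,ds+\operatorname{vskw} A_0 .$$ Then $\gamma$ satisfies the linearized York version of the ADM equations: $$\gamma_{tt}+S\operatorname{inc}\gamma-2\operatorname{hess}\alpha-2\operatorname{def}\beta_t=0,\qquad \operatorname{div} S(\gamma_t-2\operatorname{def}\beta)=0,\qquad \operatorname{div}\operatorname{div} S\gamma=0 .$$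
   Context: $\mathbb{M}$ is the space of real $3\times3$ matrices, $\mathbb{S}$ the symmetric ones, $\mathbb{T}$ the trace-free ones. For $M\in\mathbb{M}$: $S(M):=M^\top-\operatorname{tr}(M)I$; $\operatorname{sym}M$ is the symmetric part; $(\operatorname{vskw}M)_i:=-\tfrac12\epsilon_{ijk}M_{jk}$ (Levi-Civita symbol, summation convention). Differential operators act column-wise on matrix fields: $(\operatorname{curl}M)_{ij}=\epsilon_{ikl}\partial_kM_{lj}$, $(\operatorname{div}M)_i=\partial_jM_{ji}$; for a vector field $v$, $(\operatorname{grad}v)_{ij}=\partial_iv_j$, $\operatorname{def}v:=\operatorname{sym}\operatorname{grad}v$; for a scalar $u$, $\operatorname{hess}u$ is the Hessian matrix; $\operatorname{div}\operatorname{div}\sigma:=\operatorname{div}(\operatorname{div}\sigma)$; $\operatorname{inc}M:=\operatorname{curl}\big((\operatorname{curl}M)^\top\big)$. Subscript $t$ denotes time derivative. *)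

theory Defs
  imports "HOL-Analysis.Analysis"
begin

type_synonym vec3 = "real^3"
type_synonym mat3 = "real^3^3"

text \<open>Pointwise algebra on 3x3 matrices. Convention: M $ i $ j is the (i,j) entry.\<close>

definition symm :: "mat3 \<Rightarrow> mat3" where
  "symm M = (1/2) *\<^sub>R (M + transpose M)"

definition Smat :: "mat3 \<Rightarrow> mat3" where
  "Smat M = transpose M - trace M *\<^sub>R mat 1"

definition levi :: "3 \<Rightarrow> 3 \<Rightarrow> 3 \<Rightarrow> real" where
  "levi i j k =
     (if (i, j, k) \<in> {(1, 2, 3), (2, 3, 1), (3, 1, 2)} then 1
      else if (i, j, k) \<in> {(1, 3, 2), (3, 2, 1), (2, 1, 3)} then -1
      else 0)"

definition vskw :: "mat3 \<Rightarrow> vec3" where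
  "vskw M = (\<chi> i. - (1/2) * (\<Sum>j\<in>UNIV. \<Sum>k\<in>UNIV. levi i j k * M $ j $ k))"

definition symmetric_mat :: "mat3 \<Rightarrow> bool" where
  "symmetric_mat M \<longleftrightarrow> transpose M = M"

definition tracefree_mat :: "mat3 \<Rightarrow> bool" where
  "tracefree_mat M \<longleftrightarrow> trace M = 0"

definition pd :: "3 \<Rightarrow> (vec3 \<Rightarrow> 'a::real_normed_vector) \<Rightarrow> vec3 \<Rightarrow> 'a" where
  "pd k G x = vector_derivative (\<lambda>h. G (x + h *\<^sub>R axis k 1)) (at 0)"

definition curlM :: "(vec3 \<Rightarrow> mat3) \<Rightarrow> vec3 \<Rightarrow> mat3" where
  "curlM G x = (\<chi> i j. \<Sum>k\<in>UNIV. \<Sum>l\<in>UNIV. levi i k l * (pd k G x) $ l $ j)"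

definition divM :: "(vec3 \<Rightarrow> mat3) \<Rightarrow> vec3 \<Rightarrow> vec3" where
  "divM G x = (\<chi> i. \<Sum>j\<in>UNIV. (pd j G x) $ j $ i)"

definition divv :: "(vec3 \<Rightarrow> vec3) \<Rightarrow> vec3 \<Rightarrow> real" where
  "divv v x = (\<Sum>j\<in>UNIV. (pd j v x) $ j)"

definition divdiv :: "(vec3 \<Rightarrow> mat3) \<Rightarrow> vec3 \<Rightarrow> real" where
  "divdiv G x = divv (divM G) x"

definition gradv :: "(vec3 \<Rightarrow> vec3) \<Rightarrow> vec3 \<Rightarrow> mat3" where
  "gradv v x = (\<chi> i j. (pd i v x) $ j)"

definition defv :: "(vec3 \<Rightarrow> vec3) \<Rightarrow> vec3 \<Rightarrow> mat3" where
  "defv v x = symm (gradv v x)"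

definition hess :: "(vec3 \<Rightarrow> real) \<Rightarrow> vec3 \<Rightarrow> mat3" where
  "hess u x = (\<chi> i j. pd i (\<lambda>y. pd j u y) x)"

definition inc :: "(vec3 \<Rightarrow> mat3) \<Rightarrow> vec3 \<Rightarrow> mat3" where
  "inc G x = curlM (\<lambda>y. transpose (curlM G y)) x"

definition dt :: "real \<Rightarrow> (real \<Rightarrow> vec3 \<Rightarrow> 'a::real_normed_vector) \<Rightarrow> real \<Rightarrow> vec3 \<Rightarrow> 'a" where
  "dt T F t x = vector_derivative (\<lambda>s. F s x) (at t within {0..T})"

text \<open>Smoothness (C-infinity) on an open set U: all iterated directional derivatives
  exist and are continuous on U.\<close>

definition ddir :: "'p::real_normed_vector \<Rightarrow> ('p \<Rightarrow> 'a::real_normed_vector) \<Rightarrow> 'p \<Rightarrow> 'a" where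
  "ddir v f p = vector_derivative (\<lambda>h. f (p + h *\<^sub>R v)) (at 0)"

fun iterdd :: "'p::real_normed_vector list \<Rightarrow> ('p \<Rightarrow> 'a::real_normed_vector) \<Rightarrow> 'p \<Rightarrow> 'a" where
  "iterdd [] f = f"
| "iterdd (v # vs) f = ddir v (iterdd vs f)"

definition smooth_on :: "'p::real_normed_vector set \<Rightarrow> ('p \<Rightarrow> 'a::real_normed_vector) \<Rightarrow> bool" where
  "smooth_on U f \<longleftrightarrow>
     (\<forall>vs. continuous_on U (iterdd vs f) \<and>
        (\<forall>v. \<forall>p\<in>U. ((\<lambda>h. iterdd vs f (p + h *\<^sub>R v)) has_vector_derivative
                        ddir v (iterdd vs f) p) (at 0)))"

end

theory Submission
  imports Defs
begin

definition hasDD :: "'p::real_normed_vector \<Rightarrow> ('p \<Rightarrow> 'a::real_normed_vector) \<Rightarrow> 'p \<Rightarrow> 'a \<Rightarrow> bool" where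
  "hasDD v f p D \<longleftrightarrow> ((\<lambda>h. f (p + h *\<^sub>R v)) has_vector_derivative D) (at 0)"

lemma hasDD_ddir: "hasDD v f p D \<Longrightarrow> ddir v f p = D"
  unfolding hasDD_def ddir_def by (rule vector_derivative_at)

lemma iterdd_append: "iterdd (vs @ ws) f = iterdd vs (iterdd ws f)"
  by (induction vs) auto

lemma smooth_hasDD: "smooth_on U f \<Longrightarrow> p \<in> U \<Longrightarrow> hasDD v f p (ddir v f p)"
  unfolding smooth_on_def hasDD_def
  by (metis iterdd.simps(1))

lemma smooth_cont: "smooth_on U f \<Longrightarrow> continuous_on U f"
  unfolding smooth_on_def by (metis iterdd.simps(1))

lemma smooth_ddir: assumes "smooth_on U f" shows "smooth_on U (ddir v f)"
  unfolding smooth_on_def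
proof (rule allI, rule conjI)
  fix vs
  have H: "\<forall>vs. continuous_on U (iterdd vs f) \<and>
        (\<forall>v. \<forall>p\<in>U. ((\<lambda>h. iterdd vs f (p + h *\<^sub>R v)) has_vector_derivative ddir v (iterdd vs f) p) (at 0))" using assms unfolding smooth_on_def by blast
  have e: "iterdd vs (ddir v f) = iterdd (vs @ [v]) f" by (simp add: iterdd_append)
  show "continuous_on U (iterdd vs (ddir v f))" using H e by metis
  show "\<forall>w. \<forall>p\<in>U. ((\<lambda>h. iterdd vs (ddir v f) (p + h *\<^sub>R w)) has_vector_derivative ddir w (iterdd vs (ddir v f)) p) (at 0)"
    using H e by metis
qed

lemma hasDD_shift:
  assumes "hasDD v f (p + s0 *\<^sub>R v) D"
  shows "((\<lambda>s. f (p + s *\<^sub>R v)) has_vector_derivative D) (at s0)"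
proof -
  have 1: "((\<lambda>s. s - s0) has_vector_derivative 1) (at s0)"
    by (auto intro!: derivative_eq_intros)
  have 2: "((\<lambda>h. f (p + s0 *\<^sub>R v + h *\<^sub>R v)) has_vector_derivative D) (at ((\<lambda>s. s - s0) s0))"
    using assms unfolding hasDD_def by simp
  have "((\<lambda>h. f (p + s0 *\<^sub>R v + h *\<^sub>R v)) \<circ> (\<lambda>s. s - s0) has_vector_derivative 1 *\<^sub>R D) (at s0)"
    by (rule vector_diff_chain_at[OF 1 2])
  moreover have "(\<lambda>h. f (p + s0 *\<^sub>R v + h *\<^sub>R v)) \<circ> (\<lambda>s. s - s0) = (\<lambda>s. f (p + s *\<^sub>R v))"
    by (auto simp: o_def algebra_simps)
  ultimately show ?thesis by simp
qed

lemma hasDD_local: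
  assumes "open U" "p \<in> U" "\<And>q. q \<in> U \<Longrightarrow> f q = g q" "hasDD v f p D"
  shows "hasDD v g p D"
proof -
  have o: "open {h::real. p + h *\<^sub>R v \<in> U}"
  proof -
    have "continuous_on UNIV (\<lambda>h. p + h *\<^sub>R v)" by (intro continuous_intros)
    then show ?thesis using open_vimage[OF assms(1), of "\<lambda>h. p + h *\<^sub>R v"] by (simp add: vimage_def)
  qed
  show ?thesis using assms(4) unfolding hasDD_def
    by (rule has_vector_derivative_transform_within_open[OF _ o]) (use assms in auto)
qed

lemma hasDD_unique: "hasDD v f p D \<Longrightarrow> hasDD v f p D' \<Longrightarrow> D = D'"
  using hasDD_ddir by metis

lemma ddir_local:
  assumes "open U" "p \<in> U" "\<And>q. q \<in> U \<Longrightarrow> f q = g q"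
  shows "ddir v f p = ddir v g p"
proof -
  have "\<And>D. hasDD v f p D \<longleftrightarrow> hasDD v g p D"
    using hasDD_local[OF assms(1,2)] assms(3) by metis
  then show ?thesis unfolding ddir_def hasDD_def vector_derivative_def by simp
qed

lemma hasDD_linear: "bounded_linear L \<Longrightarrow> hasDD v f p D \<Longrightarrow> hasDD v (\<lambda>q. L (f q)) p (L D)"
  unfolding hasDD_def has_vector_derivative_def
  apply (drule (1) bounded_linear.has_derivative[rotated])
  by (simp add: linear_simps bounded_linear.linear)

lemma hasDD_add: "hasDD v f p D \<Longrightarrow> hasDD v g p E \<Longrightarrow> hasDD v (\<lambda>q. f q + g q) p (D + E)"
  unfolding hasDD_def by (rule has_vector_derivative_add)

lemma hasDD_diff: "hasDD v f p D \<Longrightarrow> hasDD v g p E \<Longrightarrow> hasDD v (\<lambda>q. f q - g q) p (D - E)"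
  unfolding hasDD_def by (rule has_vector_derivative_diff)

lemma hasDD_scale: "hasDD v f p D \<Longrightarrow> hasDD v (\<lambda>q. c *\<^sub>R f q) p (c *\<^sub>R D)"
  using hasDD_linear[OF bounded_linear_scaleR_right] by blast

lemma hasDD_const: "hasDD v (\<lambda>q. c) p 0"
  unfolding hasDD_def by (rule has_vector_derivative_const)

lemma hasDD_sum: "(\<And>i. i \<in> I \<Longrightarrow> hasDD v (f i) p (D i)) \<Longrightarrow> hasDD v (\<lambda>q. \<Sum>i\<in>I. f i q) p (\<Sum>i\<in>I. D i)"
  unfolding hasDD_def has_vector_derivative_def
  apply (drule has_derivative_sum)
  by (simp add: scaleR_sum_right)


lemma vd_to_has_derivative: "(g has_vector_derivative D) (at s) \<Longrightarrow> (g has_derivative (\<lambda>k. k *\<^sub>R D)) (at s)"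
  by (simp add: has_vector_derivative_def)

lemma vd_scale_left: "((\<lambda>s. s *\<^sub>R c) has_vector_derivative c) (at x)"
  unfolding has_vector_derivative_def by (rule bounded_linear_imp_has_derivative[OF bounded_linear_scaleR_left])

lemma mvt_vd:
  fixes g :: "real \<Rightarrow> 'a::real_inner"
  assumes "0 < h" "\<And>s. 0 \<le> s \<Longrightarrow> s \<le> h \<Longrightarrow> (g has_vector_derivative g' s) (at s)"
  shows "\<exists>s\<in>{0<..<h}. norm (g h - g 0) \<le> h * norm (g' s)"
proof -
  have c: "continuous_on {0..h} g"
  proof (rule continuous_at_imp_continuous_on, rule ballI)
    fix x assume "x \<in> {0..h}"
    then have "(g has_vector_derivative g' x) (at x)" using assms(2) by auto
    then show "isCont g x" by (rule has_vector_derivative_continuous)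
  qed
  obtain s where s: "s \<in> {0<..<h}" "norm (g h - g 0) \<le> norm ((\<lambda>k. k *\<^sub>R g' s) (h - 0))"
  proof -
    have derf: "\<And>x. 0 < x \<Longrightarrow> x < h \<Longrightarrow> (g has_derivative (\<lambda>k. k *\<^sub>R g' x)) (at x)"
      using assms(2) vd_to_has_derivative less_imp_le by metis
    show ?thesis using mvt_general[OF assms(1) c derf] that by blast
  qed
  then show ?thesis using assms(1) by (intro bexI[of _ s]) auto
qed

lemma schwarz_approx:
  fixes f :: "'p::real_normed_vector \<Rightarrow> 'a::real_inner"
  assumes U: "open U" and sm: "smooth_on U f" and p: "p \<in> U" and e: "e > 0"
  shows "\<exists>d>0. \<forall>h. 0 < h \<and> h < d \<longrightarrow>
     norm (f (p + h *\<^sub>R u + h *\<^sub>R v) - f (p + h *\<^sub>R u) - f (p + h *\<^sub>R v) + f p - (h*h) *\<^sub>R ddir v (ddir u f) p) \<le> h*h*e"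
proof -
  define \<psi> where "\<psi> = ddir v (ddir u f) p"
  have smu: "smooth_on U (ddir u f)" by (rule smooth_ddir[OF sm])
  have cg: "continuous_on U (ddir v (ddir u f))" by (rule smooth_cont[OF smooth_ddir[OF smu]])
  have "continuous (at p) (ddir v (ddir u f))"
    using cg U p by (simp add: continuous_on_eq_continuous_at)
  then obtain d0 where d0: "d0 > 0" "\<And>z. dist z p < d0 \<Longrightarrow> dist (ddir v (ddir u f) z) \<psi> < e"
    unfolding continuous_at_eps_delta \<psi>_def using e by blast
  obtain d2 where d2: "d2 > 0" "ball p d2 \<subseteq> U" using U p open_contains_ball by blast
  define d1 where "d1 = min d0 d2"
  have d1: "d1 > 0" using d0 d2 by (simp add: d1_def)
  have inU: "\<And>z. dist z p < d1 \<Longrightarrow> z \<in> U" using d2 by (auto simp: d1_def dist_commute)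
  have close: "\<And>z. dist z p < d1 \<Longrightarrow> norm (ddir v (ddir u f) z - \<psi>) < e"
    using d0 by (auto simp: d1_def dist_norm)
  define d where "d = d1 / (norm u + norm v + 1)"
  have np: "0 < norm u + norm v + 1" using norm_ge_zero[of u] norm_ge_zero[of v] by linarith
  have dpos: "d > 0" using d1 np by (simp add: d_def)
  have near: "dist (p + a *\<^sub>R u + b *\<^sub>R v) p < d1" if "0 \<le> a" "a \<le> h" "0 \<le> b" "b \<le> h" "h < d" for a b h
  proof -
    have "dist (p + a *\<^sub>R u + b *\<^sub>R v) p = norm (a *\<^sub>R u + b *\<^sub>R v)" by (simp add: dist_norm)
    also have "\<dots> \<le> a * norm u + b * norm v" using that
      using norm_triangle_ineq[of "a *\<^sub>R u" "b *\<^sub>R v"] that by simp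
    also have "\<dots> \<le> h * norm u + h * norm v" using that by (intro add_mono mult_right_mono) auto
    also have "\<dots> \<le> h * (norm u + norm v + 1)" using that by (simp add: algebra_simps)
    also have "\<dots> < d * (norm u + norm v + 1)" using that by (intro mult_strict_right_mono) (use np in auto)
    also have "\<dots> = d1" using np by (simp add: d_def)
    finally show ?thesis .
  qed
  show ?thesis
  proof (intro exI[of _ d] conjI dpos allI impI)
    fix h :: real assume h: "0 < h \<and> h < d"
    define \<phi> where "\<phi> s = f (p + s *\<^sub>R u + h *\<^sub>R v) - f (p + s *\<^sub>R u) - s *\<^sub>R (h *\<^sub>R \<psi>)" for s
    define \<phi>' where "\<phi>' s = ddir u f (p + h *\<^sub>R v + s *\<^sub>R u) - ddir u f (p + s *\<^sub>R u) - h *\<^sub>R \<psi>" for s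
    have der1: "(\<phi> has_vector_derivative \<phi>' s) (at s)" if s: "0 \<le> s" "s \<le> h" for s
    proof -
      have "dist (p + s *\<^sub>R u + h *\<^sub>R v) p < d1" by (rule near) (use s h in auto)
      then have a: "p + h *\<^sub>R v + s *\<^sub>R u \<in> U" using inU by (simp add: add_ac)
      have "dist (p + s *\<^sub>R u + 0 *\<^sub>R v) p < d1" by (rule near) (use s h in auto)
      then have b: "p + s *\<^sub>R u \<in> U" using inU by simp
      have 1: "((\<lambda>s. f (p + h *\<^sub>R v + s *\<^sub>R u)) has_vector_derivative ddir u f (p + h *\<^sub>R v + s *\<^sub>R u)) (at s)"
        by (rule hasDD_shift) (rule smooth_hasDD[OF sm a])
      have 2: "((\<lambda>s. f (p + s *\<^sub>R u)) has_vector_derivative ddir u f (p + s *\<^sub>R u)) (at s)"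
        by (rule hasDD_shift) (rule smooth_hasDD[OF sm b])
      have 3: "((\<lambda>s. s *\<^sub>R (h *\<^sub>R \<psi>)) has_vector_derivative h *\<^sub>R \<psi>) (at s)"
        by (rule vd_scale_left)
      have "((\<lambda>s. f (p + h *\<^sub>R v + s *\<^sub>R u) - f (p + s *\<^sub>R u) - s *\<^sub>R (h *\<^sub>R \<psi>)) has_vector_derivative \<phi>' s) (at s)"
        unfolding \<phi>'_def by (intro has_vector_derivative_diff 1 2 3)
      then show ?thesis unfolding \<phi>_def by (simp add: add_ac)
    qed
    obtain \<xi> where \<xi>: "\<xi> \<in> {0<..<h}" "norm (\<phi> h - \<phi> 0) \<le> h * norm (\<phi>' \<xi>)"
      using mvt_vd[of h \<phi> \<phi>', OF _ der1] h by blast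
    define Km where "Km r = ddir u f (p + \<xi> *\<^sub>R u + r *\<^sub>R v) - r *\<^sub>R \<psi>" for r
    define Km' where "Km' r = ddir v (ddir u f) (p + \<xi> *\<^sub>R u + r *\<^sub>R v) - \<psi>" for r
    have der2: "(Km has_vector_derivative Km' r) (at r)" if r: "0 \<le> r" "r \<le> h" for r
    proof -
      have "dist (p + \<xi> *\<^sub>R u + r *\<^sub>R v) p < d1" by (rule near) (use r h \<xi> in auto)
      then have a: "p + \<xi> *\<^sub>R u + r *\<^sub>R v \<in> U" using inU by simp
      have 1: "((\<lambda>r. ddir u f (p + \<xi> *\<^sub>R u + r *\<^sub>R v)) has_vector_derivative ddir v (ddir u f) (p + \<xi> *\<^sub>R u + r *\<^sub>R v)) (at r)"
        by (rule hasDD_shift) (rule smooth_hasDD[OF smu a])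
      have 3: "((\<lambda>s. s *\<^sub>R \<psi>) has_vector_derivative \<psi>) (at r)"
        by (rule vd_scale_left)
      show ?thesis unfolding Km_def Km'_def by (intro has_vector_derivative_diff 1 3)
    qed
    obtain \<rho> where \<rho>: "\<rho> \<in> {0<..<h}" "norm (Km h - Km 0) \<le> h * norm (Km' \<rho>)"
      using mvt_vd[of h Km Km', OF _ der2] h by blast
    have "norm (Km' \<rho>) < e"
    proof -
      have "dist (p + \<xi> *\<^sub>R u + \<rho> *\<^sub>R v) p < d1" using \<xi>(1) \<rho>(1) h by (intro near) auto
      then show ?thesis using close by (simp add: Km'_def)
    qed
    then have c1: "norm (Km h - Km 0) \<le> h * e" using \<rho>(2) h
      by (meson less_eq_real_def mult_left_mono order_trans)
    have "Km h - Km 0 = \<phi>' \<xi>" unfolding Km_def \<phi>'_def by (simp add: add_ac)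
    then have "norm (\<phi> h - \<phi> 0) \<le> h * (h * e)" using \<xi>(2) c1 h
      by (metis less_eq_real_def mult_left_mono order_trans)
    moreover have "\<phi> h - \<phi> 0 = f (p + h *\<^sub>R u + h *\<^sub>R v) - f (p + h *\<^sub>R u) - f (p + h *\<^sub>R v) + f p - (h*h) *\<^sub>R \<psi>"
      unfolding \<phi>_def by (simp add: algebra_simps)
    ultimately show "norm (f (p + h *\<^sub>R u + h *\<^sub>R v) - f (p + h *\<^sub>R u) - f (p + h *\<^sub>R v) + f p - (h*h) *\<^sub>R ddir v (ddir u f) p) \<le> h*h*e"
      by (simp add: \<psi>_def mult.assoc)
  qed
qed

lemma schwarz:
  fixes f :: "'p::real_normed_vector \<Rightarrow> 'a::real_inner"
  assumes U: "open U" and sm: "smooth_on U f" and p: "p \<in> U"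
  shows "ddir u (ddir v f) p = ddir v (ddir u f) p"
proof -
  have "norm (ddir u (ddir v f) p - ddir v (ddir u f) p) \<le> 2 * e" if e: "e > 0" for e
  proof -
    obtain d1 where d1: "d1 > 0" "\<And>h. 0 < h \<and> h < d1 \<Longrightarrow>
     norm (f (p + h *\<^sub>R u + h *\<^sub>R v) - f (p + h *\<^sub>R u) - f (p + h *\<^sub>R v) + f p - (h*h) *\<^sub>R ddir v (ddir u f) p) \<le> h*h*e"
      using schwarz_approx[OF U sm p e, of u v] by blast
    obtain d2 where d2: "d2 > 0" "\<And>h. 0 < h \<and> h < d2 \<Longrightarrow>
     norm (f (p + h *\<^sub>R v + h *\<^sub>R u) - f (p + h *\<^sub>R v) - f (p + h *\<^sub>R u) + f p - (h*h) *\<^sub>R ddir u (ddir v f) p) \<le> h*h*e"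
      using schwarz_approx[OF U sm p e, of v u] by blast
    define h where "h = min d1 d2 / 2"
    have h: "0 < h" "h < d1" "h < d2" using d1 d2 by (auto simp: h_def)
    define \<Delta> where "\<Delta> = f (p + h *\<^sub>R u + h *\<^sub>R v) - f (p + h *\<^sub>R u) - f (p + h *\<^sub>R v) + f p"
    have 1: "norm (\<Delta> - (h*h) *\<^sub>R ddir v (ddir u f) p) \<le> h*h*e" using d1(2)[of h] h by (simp add: \<Delta>_def)
    have eq: "f (p + h *\<^sub>R v + h *\<^sub>R u) = f (p + h *\<^sub>R u + h *\<^sub>R v)" by (simp add: add_ac)
    have eq2: "f (p + h *\<^sub>R v + h *\<^sub>R u) - f (p + h *\<^sub>R v) - f (p + h *\<^sub>R u) + f p = \<Delta>"
      unfolding eq \<Delta>_def by (simp add: algebra_simps)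
    have 2: "norm (\<Delta> - (h*h) *\<^sub>R ddir u (ddir v f) p) \<le> h*h*e" using d2(2)[of h] h eq2 by simp
    have eq3: "(h*h) *\<^sub>R (ddir u (ddir v f) p - ddir v (ddir u f) p) = 
       (\<Delta> - (h*h) *\<^sub>R ddir v (ddir u f) p) - (\<Delta> - (h*h) *\<^sub>R ddir u (ddir v f) p)"
      by (simp add: algebra_simps)
    have "norm ((h*h) *\<^sub>R (ddir u (ddir v f) p - ddir v (ddir u f) p))
       \<le> norm (\<Delta> - (h*h) *\<^sub>R ddir v (ddir u f) p) + norm (\<Delta> - (h*h) *\<^sub>R ddir u (ddir v f) p)"
      unfolding eq3 by (rule norm_triangle_ineq4)
    also have "\<dots> \<le> (h*h) * (2*e)" using 1 2 by simp
    finally have "(h*h) * norm (ddir u (ddir v f) p - ddir v (ddir u f) p) \<le> (h*h) * (2*e)" by simp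
    then show ?thesis using h by (simp add: mult_le_cancel_left_pos)
  qed
  then have "norm (ddir u (ddir v f) p - ddir v (ddir u f) p) = 0"
  proof (rule_tac ccontr)
    assume H: "\<And>e. e > 0 \<Longrightarrow> norm (ddir u (ddir v f) p - ddir v (ddir u f) p) \<le> 2 * e"
      and n: "norm (ddir u (ddir v f) p - ddir v (ddir u f) p) \<noteq> 0"
    then have "norm (ddir u (ddir v f) p - ddir v (ddir u f) p) > 0" by simp
    then show False using H[of "norm (ddir u (ddir v f) p - ddir v (ddir u f) p) / 4"] by simp
  qed
  then show ?thesis by simp
qed


definition Cc :: "3 \<Rightarrow> mat3 \<Rightarrow> mat3" where
  "Cc k M = (\<chi> i j. \<Sum>l\<in>UNIV. levi i k l * M $ l $ j)"
definition Dv :: "3 \<Rightarrow> mat3 \<Rightarrow> vec3" where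
  "Dv j M = (\<chi> i. M $ j $ i)"
definition Gr :: "3 \<Rightarrow> vec3 \<Rightarrow> mat3" where
  "Gr i w = (\<chi> a b. if a = i then w $ b else 0)"

lemma levi_simps[simp]:
  "levi 1 1 1 = 0" "levi 1 1 2 = 0" "levi 1 1 3 = 0" "levi 1 2 1 = 0" "levi 1 2 2 = 0" "levi 1 2 3 = 1"
  "levi 1 3 1 = 0" "levi 1 3 2 = -1" "levi 1 3 3 = 0"
  "levi 2 1 1 = 0" "levi 2 1 2 = 0" "levi 2 1 3 = -1" "levi 2 2 1 = 0" "levi 2 2 2 = 0" "levi 2 2 3 = 0"
  "levi 2 3 1 = 1" "levi 2 3 2 = 0" "levi 2 3 3 = 0"
  "levi 3 1 1 = 0" "levi 3 1 2 = 1" "levi 3 1 3 = 0" "levi 3 2 1 = -1" "levi 3 2 2 = 0" "levi 3 2 3 = 0"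
  "levi 3 3 1 = 0" "levi 3 3 2 = 0" "levi 3 3 3 = 0"
  by (simp_all add: levi_def)

lemmas alg_simps = Cc_def Dv_def Gr_def Smat_def symm_def trace_def sum_3 vec_eq_iff forall_3
  transpose_def mat_def vskw_def

lemma Smat_inv: "Smat G = X \<Longrightarrow> G = transpose X - (trace X / 2) *\<^sub>R mat 1"
  unfolding Smat_def by (auto simp: alg_simps field_simps)

lemma alg_a:
  fixes H :: "3 \<Rightarrow> 3 \<Rightarrow> mat3" and G :: mat3
  assumes s1: "H 2 1 = H 1 2" "H 3 1 = H 1 3" "H 3 2 = H 2 3"
    and s2: "\<And>k l. H k l $ 2 $ 1 = H k l $ 1 $ 2" "\<And>k l. H k l $ 3 $ 1 = H k l $ 1 $ 3" "\<And>k l. H k l $ 3 $ 2 = H k l $ 2 $ 3"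
    and c: "(\<Sum>j\<in>UNIV. (\<Sum>m\<in>UNIV. Dv m (Smat (H j m))) $ j) = 0"
    and g: "Smat G = - symm (\<Sum>k\<in>UNIV. Cc k (\<Sum>l\<in>UNIV. Cc l (Smat (H k l))))"
  shows "G + Smat (\<Sum>k\<in>UNIV. Cc k (transpose (\<Sum>l\<in>UNIV. Cc l (H k l))))
     - 2 *\<^sub>R (\<chi> i j. (1/2) * trace (H i j))
     - 2 *\<^sub>R symm (\<Sum>i\<in>UNIV. Gr i ((1/2) *\<^sub>R (\<Sum>j\<in>UNIV. Dv j (Smat (H i j))))) = 0"
proof -
  note G = Smat_inv[OF g]
  show ?thesis using c unfolding G apply (simp add: alg_simps s1 s2 algebra_simps)
    by (simp add: field_simps)
qed


lemma alg_c1: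
  fixes N :: "3 \<Rightarrow> 3 \<Rightarrow> mat3"
  assumes s1: "N 2 1 = N 1 2" "N 3 1 = N 1 3" "N 3 2 = N 2 3"
    and c: "\<And>k. (\<Sum>j\<in>UNIV. Dv j (N k j)) = 0"
  shows "(\<Sum>k\<in>UNIV. Dv k (symm (\<Sum>l\<in>UNIV. Cc l (N k l))))
       = (\<Sum>k\<in>UNIV. Dv k (Smat (2 *\<^sub>R symm (\<Sum>i\<in>UNIV. Gr i (vskw (N k i))))))"
proof -
  have c1: "(\<Sum>j\<in>UNIV. Dv j (N 1 j)) $ i = 0" "(\<Sum>j\<in>UNIV. Dv j (N 2 j)) $ i = 0" "(\<Sum>j\<in>UNIV. Dv j (N 3 j)) $ i = 0" for i
    using c by simp_all
  show ?thesis using c1[of 1] c1[of 2] c1[of 3]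
    by (simp add: alg_simps s1 field_simps)
qed

lemma alg_c2:
  fixes T :: "3 \<Rightarrow> 3 \<Rightarrow> 3 \<Rightarrow> mat3"
  assumes p12: "\<And>k l m. T k l m = T l k m" and p23: "\<And>k l m. T k l m = T k m l"
    and s2: "\<And>k l m. T k l m $ 2 $ 1 = T k l m $ 1 $ 2" "\<And>k l m. T k l m $ 3 $ 1 = T k l m $ 1 $ 3" "\<And>k l m. T k l m $ 3 $ 2 = T k l m $ 2 $ 3"
    and c: "\<And>k. (\<Sum>j\<in>UNIV. (\<Sum>m\<in>UNIV. Dv m (Smat (T k j m))) $ j) = 0"
  shows "(\<Sum>k\<in>UNIV. Dv k (symm (\<Sum>l\<in>UNIV. Cc l (- (\<Sum>m\<in>UNIV. Cc m (Smat (T k l m)))))))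
       = (\<Sum>k\<in>UNIV. Dv k (Smat (symm (\<Sum>i\<in>UNIV. Gr i (\<Sum>j\<in>UNIV. Dv j (Smat (T k i j)))))))"
proof -
  have s1: "T 1 2 1 = T 1 1 2" "T 1 3 1 = T 1 1 3" "T 1 3 2 = T 1 2 3" "T 2 1 1 = T 1 1 2" "T 2 1 2 = T 1 2 2" "T 2 1 3 = T 1 2 3" "T 2 2 1 = T 1 2 2" "T 2 3 1 = T 1 2 3" "T 2 3 2 = T 2 2 3" "T 3 1 1 = T 1 1 3" "T 3 1 2 = T 1 2 3" "T 3 1 3 = T 1 3 3" "T 3 2 1 = T 1 2 3" "T 3 2 2 = T 2 2 3" "T 3 2 3 = T 2 3 3" "T 3 3 1 = T 1 3 3" "T 3 3 2 = T 2 3 3"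
    by (metis p12 p23)+
  have c1: "(\<Sum>j\<in>UNIV. (\<Sum>m\<in>UNIV. Dv m (Smat (T 1 j m))) $ j) = 0"
    "(\<Sum>j\<in>UNIV. (\<Sum>m\<in>UNIV. Dv m (Smat (T 2 j m))) $ j) = 0"
    "(\<Sum>j\<in>UNIV. (\<Sum>m\<in>UNIV. Dv m (Smat (T 3 j m))) $ j) = 0"
    using c by simp_all
  show ?thesis using c1
    by (simp add: alg_simps s1 s2 field_simps)
qed


lemma pd_ddir: "pd k = ddir (axis k 1)"
  by (intro ext) (simp add: pd_def ddir_def)

lemma curlM_alt: "curlM G y = (\<Sum>k\<in>UNIV. Cc k (pd k G y))"
  by (simp add: curlM_def Cc_def vec_eq_iff sum_component)

lemma divM_alt: "divM G y = (\<Sum>j\<in>UNIV. Dv j (pd j G y))"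
  by (simp add: divM_def Dv_def vec_eq_iff sum_component)

lemma gradv_alt: "gradv v y = (\<Sum>i\<in>UNIV. Gr i (pd i v y))"
  by (simp add: gradv_def Gr_def vec_eq_iff sum_component if_distrib cong: if_cong)

lemma bl_Cc: "bounded_linear (Cc k)"
  unfolding linear_conv_bounded_linear[symmetric]
  by (rule linearI) (simp_all add: Cc_def vec_eq_iff sum.distrib algebra_simps sum_distrib_left)
lemma bl_Dv: "bounded_linear (Dv k)"
  unfolding linear_conv_bounded_linear[symmetric]
  by (rule linearI) (simp_all add: Dv_def vec_eq_iff)
lemma bl_Gr: "bounded_linear (Gr k)"
  unfolding linear_conv_bounded_linear[symmetric]
  by (rule linearI) (simp_all add: Gr_def vec_eq_iff)
lemma bl_Smat: "bounded_linear Smat"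
  unfolding linear_conv_bounded_linear[symmetric]
  by (rule linearI) (simp_all add: Smat_def vec_eq_iff trace_def transpose_def mat_def sum.distrib algebra_simps sum_distrib_left)
lemma bl_symm: "bounded_linear symm"
  unfolding linear_conv_bounded_linear[symmetric]
  by (rule linearI) (simp_all add: symm_def vec_eq_iff transpose_def algebra_simps)
lemma bl_transpose: "bounded_linear (transpose :: mat3 \<Rightarrow> mat3)"
  unfolding linear_conv_bounded_linear[symmetric]
  by (rule linearI) (simp_all add: vec_eq_iff transpose_def)
lemma bl_htr: "bounded_linear (\<lambda>M::mat3. (1/2) * trace M)"
  unfolding linear_conv_bounded_linear[symmetric]
  by (rule linearI) (simp_all add: trace_def sum.distrib algebra_simps sum_distrib_left)
lemma bl_vskw: "bounded_linear vskw"
  unfolding linear_conv_bounded_linear[symmetric]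
  by (rule linearI) (simp_all add: vskw_def vec_eq_iff sum.distrib algebra_simps sum_distrib_left)
lemma bl_nth: "bounded_linear (\<lambda>w::vec3. w $ j)"
  by (rule bounded_linear_vec_nth)
lemma bl_neg: "bounded_linear (\<lambda>M::'a::real_normed_vector. - M)"
  by (rule bounded_linear_minus[OF bounded_linear_ident])

lemma hasDD_Cc: "hasDD v f p D \<Longrightarrow> hasDD v (\<lambda>q. Cc k (f q)) p (Cc k D)"
  by (rule hasDD_linear[OF bl_Cc])
lemma hasDD_Dv: "hasDD v f p D \<Longrightarrow> hasDD v (\<lambda>q. Dv k (f q)) p (Dv k D)"
  by (rule hasDD_linear[OF bl_Dv])
lemma hasDD_Gr: "hasDD v f p D \<Longrightarrow> hasDD v (\<lambda>q. Gr k (f q)) p (Gr k D)"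
  by (rule hasDD_linear[OF bl_Gr])
lemma hasDD_Smat: "hasDD v f p D \<Longrightarrow> hasDD v (\<lambda>q. Smat (f q)) p (Smat D)"
  by (rule hasDD_linear[OF bl_Smat])
lemma hasDD_symm: "hasDD v f p D \<Longrightarrow> hasDD v (\<lambda>q. symm (f q)) p (symm D)"
  by (rule hasDD_linear[OF bl_symm])
lemma hasDD_transpose: "hasDD v f p D \<Longrightarrow> hasDD v (\<lambda>q. transpose (f q) :: mat3) p (transpose D)"
  by (rule hasDD_linear[OF bl_transpose])
lemma hasDD_htr: "hasDD v f p D \<Longrightarrow> hasDD v (\<lambda>q. (1/2) * trace (f q :: mat3)) p ((1/2) * trace D)"
  by (rule hasDD_linear[OF bl_htr])
lemma hasDD_vskw: "hasDD v f p D \<Longrightarrow> hasDD v (\<lambda>q. vskw (f q)) p (vskw D)"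
  by (rule hasDD_linear[OF bl_vskw])
lemma hasDD_nth: "hasDD v f p D \<Longrightarrow> hasDD v (\<lambda>q. (f q :: vec3) $ j) p (D $ j)"
  by (rule hasDD_linear[OF bl_nth])
lemma hasDD_neg: "hasDD v f p D \<Longrightarrow> hasDD v (\<lambda>q. - f q) p (- D)"
  by (rule hasDD_linear[OF bl_neg])

lemmas hasDD_rules = hasDD_Cc hasDD_Dv hasDD_Gr hasDD_Smat hasDD_symm hasDD_transpose hasDD_htr
  hasDD_vskw hasDD_nth hasDD_neg hasDD_add hasDD_diff hasDD_scale hasDD_sum hasDD_const

lemma cont_lin: "bounded_linear L \<Longrightarrow> continuous_on S f \<Longrightarrow> continuous_on S (\<lambda>x. L (f x))"
  using continuous_on_compose[of S f L] linear_continuous_on[of L "f ` S"] by (simp add: o_def)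

lemma cont_Dv: "continuous_on S f \<Longrightarrow> continuous_on S (\<lambda>x. Dv k (f x))" by (rule cont_lin[OF bl_Dv])
lemma cont_Smat: "continuous_on S f \<Longrightarrow> continuous_on S (\<lambda>x. Smat (f x))" by (rule cont_lin[OF bl_Smat])

lemma slice_hasDD: "hasDD (0, v) F (t, x) D \<Longrightarrow> hasDD v (\<lambda>y. F (t, y)) x D"
  unfolding hasDD_def by simp
lemma slice_ddir: "ddir v (\<lambda>y. F (t, y)) x = ddir (0, v) F (t, x)"
  unfolding ddir_def by simp
lemma time_vd: "hasDD (1, 0) F (t, x) D \<Longrightarrow> ((\<lambda>s. F (s, x)) has_vector_derivative D) (at t)"
  using hasDD_shift[of "(1::real, 0)" F "(0, x)" t D] by simp


locale adm =
  fixes \<Omega> :: "vec3 set" and T a b :: real and A \<gamma> :: "real \<Rightarrow> vec3 \<Rightarrow> mat3"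
  assumes o\<Omega>: "open \<Omega>" and Tpos: "T > 0" and a0: "a < 0" and bT: "T < b"
    and smG: "smooth_on ({a<..<b} \<times> \<Omega>) (\<lambda>(t, x). \<gamma> t x)"
    and smA: "smooth_on ({a<..<b} \<times> \<Omega>) (\<lambda>(t, x). A t x)"
    and \<gamma>_sym: "\<And>t x. t \<in> {0..T} \<Longrightarrow> x \<in> \<Omega> \<Longrightarrow> symmetric_mat (\<gamma> t x)"
    and eq1: "\<And>t x. t \<in> {0..T} \<Longrightarrow> x \<in> \<Omega> \<Longrightarrow> divM (A t) x = 0"
    and eq2: "\<And>t x. t \<in> {0..T} \<Longrightarrow> x \<in> \<Omega> \<Longrightarrow>
                dt T A t x + curlM (\<lambda>y. Smat (\<gamma> t y)) x = 0"
    and eq3: "\<And>t x. t \<in> {0..T} \<Longrightarrow> x \<in> \<Omega> \<Longrightarrow>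
                Smat (dt T \<gamma> t x) - symm (curlM (A t) x) = 0"
    and eq4: "\<And>t x. t \<in> {0..T} \<Longrightarrow> x \<in> \<Omega> \<Longrightarrow> divdiv (\<lambda>y. Smat (\<gamma> t y)) x = 0"
begin

definition "U = {a<..<b} \<times> \<Omega>"
definition "GG = (\<lambda>(t, x). \<gamma> t x)"
definition "AA = (\<lambda>(t, x). A t x)"
definition "e0 = (1::real, 0::vec3)"
definition "ev k = (0::real, axis k (1::real))"

lemma oU: "open U" unfolding U_def using o\<Omega> by (simp add: open_Times)
lemma inU: "t \<in> {0..T} \<Longrightarrow> y \<in> \<Omega> \<Longrightarrow> (t, y) \<in> U" unfolding U_def using a0 bT by auto
lemma inU0: "y \<in> \<Omega> \<Longrightarrow> (0, y) \<in> U" unfolding U_def using a0 bT Tpos by auto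
lemma sGG: "smooth_on U GG" using smG by (simp add: U_def GG_def)
lemma sAA: "smooth_on U AA" using smA by (simp add: U_def AA_def)
lemma \<gamma>_eq: "\<gamma> = (\<lambda>t y. GG (t, y))" by (simp add: GG_def)
lemma A_eq: "A = (\<lambda>t y. AA (t, y))" by (simp add: AA_def)

lemma sp_has: "smooth_on U F \<Longrightarrow> q \<in> U \<Longrightarrow> hasDD (ev k) F q (ddir (ev k) F q)"
  by (rule smooth_hasDD)
lemma sp_pd: "pd k (\<lambda>y. F (t, y)) y = ddir (ev k) F (t, y)"
  by (simp add: pd_ddir slice_ddir ev_def)
lemma sp_hasS: "hasDD (ev k) F (t, y) D \<Longrightarrow> hasDD (axis k 1) (\<lambda>y. F (t, y)) y D"
  unfolding ev_def by (rule slice_hasDD)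

lemma SU:
  assumes "x \<in> \<Omega>" "\<And>y. y \<in> \<Omega> \<Longrightarrow> f (t, y) = g (t, y)"
    "hasDD (ev k) f (t, x) D" "hasDD (ev k) g (t, x) E"
  shows "D = E"
proof -
  have 1: "hasDD (axis k 1) (\<lambda>y. f (t, y)) x D" using assms(3) by (rule sp_hasS)
  have 2: "hasDD (axis k 1) (\<lambda>y. g (t, y)) x E" using assms(4) by (rule sp_hasS)
  have "hasDD (axis k 1) (\<lambda>y. g (t, y)) x D" by (rule hasDD_local[OF o\<Omega> assms(1) _ 1]) (use assms(2) in auto)
  then show ?thesis using 2 by (rule hasDD_unique)
qed

lemma PDL:
  assumes "x \<in> \<Omega>" "\<And>y. y \<in> \<Omega> \<Longrightarrow> \<Phi> y = \<Psi> (t, y)" "hasDD (ev k) \<Psi> (t, x) D"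
  shows "hasDD (axis k 1) \<Phi> x D" "pd k \<Phi> x = D"
proof -
  have 1: "hasDD (axis k 1) (\<lambda>y. \<Psi> (t, y)) x D" using assms(3) by (rule sp_hasS)
  show 2: "hasDD (axis k 1) \<Phi> x D" by (rule hasDD_local[OF o\<Omega> assms(1) _ 1]) (use assms(2) in auto)
  show "pd k \<Phi> x = D" using hasDD_ddir[OF 2] by (simp add: pd_ddir)
qed

lemma tm_has: "smooth_on U F \<Longrightarrow> (t, y) \<in> U \<Longrightarrow> ((\<lambda>s. F (s, y)) has_vector_derivative ddir e0 F (t, y)) (at t)"
  unfolding e0_def by (rule time_vd) (rule smooth_hasDD)

lemma tm_hasD: "hasDD e0 F (t, y) D \<Longrightarrow> ((\<lambda>s. F (s, y)) has_vector_derivative D) (at t)"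
  unfolding e0_def by (rule time_vd)

lemma dt_eq:
  assumes "smooth_on U F" "t \<in> {0..T}" "y \<in> \<Omega>"
  shows "dt T (\<lambda>s y. F (s, y)) t y = ddir e0 F (t, y)"
proof -
  have "((\<lambda>s. F (s, y)) has_vector_derivative ddir e0 F (t, y)) (at t within cbox 0 T)"
    using tm_has[OF assms(1) inU[OF assms(2,3)]] by (rule has_vector_derivative_at_within)
  then show ?thesis unfolding dt_def
    using vector_derivative_within_cbox[of 0 T t] Tpos assms(2) by simp
qed

lemma TU:
  assumes "t \<in> {0..T}" "\<And>s. s \<in> {0..T} \<Longrightarrow> f (s, y) = g (s, y)"
    "hasDD e0 f (t, y) D" "hasDD e0 g (t, y) E"
  shows "D = E"
proof -
  have 1: "((\<lambda>s. f (s, y)) has_vector_derivative D) (at t within cbox 0 T)"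
    using tm_hasD[OF assms(3)] by (rule has_vector_derivative_at_within)
  have 2: "((\<lambda>s. g (s, y)) has_vector_derivative E) (at t within cbox 0 T)"
    using tm_hasD[OF assms(4)] by (rule has_vector_derivative_at_within)
  have 3: "((\<lambda>s. f (s, y)) has_vector_derivative E) (at t within cbox 0 T)"
    by (rule has_vector_derivative_transform[OF _ _ 2]) (use assms in auto)
  show ?thesis using vector_derivative_unique_within_closed_interval[OF Tpos _ 1 3] assms(1) by simp
qed

lemma TS:
  fixes F :: "real \<times> vec3 \<Rightarrow> mat3"
  assumes "smooth_on U F" "t \<in> {0..T}" "\<And>y. y \<in> \<Omega> \<Longrightarrow> transpose (F (t, y)) = F (t, y)" "y \<in> \<Omega>"
  shows "transpose (ddir (ev k) F (t, y)) = ddir (ev k) F (t, y)"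
proof (rule SU[OF assms(4), of "\<lambda>q. transpose (F q)" t F])
  show "hasDD (ev k) (\<lambda>q. transpose (F q)) (t, y) (transpose (ddir (ev k) F (t, y)))"
    by (intro hasDD_rules sp_has assms(1) inU assms(2,4))
  show "hasDD (ev k) F (t, y) (ddir (ev k) F (t, y))" by (intro sp_has assms(1) inU assms(2,4))
qed (use assms(3) in auto)

lemma schwarz3:
  fixes F :: "real \<times> vec3 \<Rightarrow> mat3"
  assumes "smooth_on U F" "q \<in> U"
  shows "ddir w (ddir u (ddir v F)) q = ddir u (ddir v (ddir w F)) q"
proof -
  have "ddir w (ddir u (ddir v F)) q = ddir u (ddir w (ddir v F)) q"
    by (rule schwarz[OF oU smooth_ddir[OF assms(1)] assms(2)])
  also have "\<dots> = ddir u (ddir v (ddir w F)) q"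
    by (rule ddir_local[OF oU assms(2)]) (rule schwarz[OF oU assms(1)])
  finally show ?thesis .
qed

lemma sw: "smooth_on U (F :: real \<times> vec3 \<Rightarrow> mat3) \<Longrightarrow> q \<in> U \<Longrightarrow> ddir u (ddir v F) q = ddir v (ddir u F) q"
  by (rule schwarz[OF oU])
lemma sw_inner: "smooth_on U (F :: real \<times> vec3 \<Rightarrow> mat3) \<Longrightarrow> q \<in> U \<Longrightarrow> ddir w (ddir u (ddir v F)) q = ddir w (ddir v (ddir u F)) q"
  by (rule ddir_local[OF oU]) (auto intro: sw)

end

lemma vd_cmul: "(g has_vector_derivative g') F \<Longrightarrow> ((\<lambda>x. c *\<^sub>R g x) has_vector_derivative c *\<^sub>R g') F"
  unfolding has_vector_derivative_def
  apply (drule bounded_linear.has_derivative[OF bounded_linear_scaleR_right[of c]])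
  apply (erule has_derivative_eq_rhs)
  by (simp add: mult.commute)

context adm begin

definition "Psi0 q = (\<Sum>j\<in>UNIV. Dv j (Smat (ddir (ev j) GG q)))"

lemma pdS: "(t, y) \<in> U \<Longrightarrow> pd l (\<lambda>y. Smat (\<gamma> t y)) y = Smat (ddir (ev l) GG (t, y))"
proof -
  assume q: "(t, y) \<in> U"
  have "hasDD (axis l 1) (\<lambda>y. Smat (GG (t, y))) y (Smat (ddir (ev l) GG (t, y)))"
    by (intro sp_hasS hasDD_rules sp_has sGG q)
  then have "ddir (axis l 1) (\<lambda>y. Smat (GG (t, y))) y = Smat (ddir (ev l) GG (t, y))"
    by (rule hasDD_ddir)
  moreover have "pd l (\<lambda>y. Smat (\<gamma> t y)) y = ddir (axis l 1) (\<lambda>y. Smat (GG (t, y))) y"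
    by (simp add: pd_ddir GG_def)
  ultimately show ?thesis by simp
qed

lemma GG_slice: "(\<lambda>y. GG (t, y)) = \<gamma> t" by (simp add: GG_def)
lemma AA_slice: "(\<lambda>y. AA (t, y)) = A t" by (simp add: AA_def)
lemma GG_fun: "(\<lambda>s y. GG (s, y)) = \<gamma>" by (simp add: GG_def)
lemma AA_fun: "(\<lambda>s y. AA (s, y)) = A" by (simp add: AA_def)
lemma pdG: "pd k (\<gamma> t) y = ddir (ev k) GG (t, y)" using sp_pd[of k GG t y] unfolding GG_slice .
lemma pdA: "pd k (A t) y = ddir (ev k) AA (t, y)" using sp_pd[of k AA t y] unfolding AA_slice .
lemma dtG: "t \<in> {0..T} \<Longrightarrow> y \<in> \<Omega> \<Longrightarrow> dt T \<gamma> t y = ddir e0 GG (t, y)"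
  using dt_eq[OF sGG] unfolding GG_fun .
lemma dtA: "t \<in> {0..T} \<Longrightarrow> y \<in> \<Omega> \<Longrightarrow> dt T A t y = ddir e0 AA (t, y)"
  using dt_eq[OF sAA] unfolding AA_fun .

lemma curl_\<gamma>: "curlM (\<gamma> t) y = (\<Sum>l\<in>UNIV. Cc l (ddir (ev l) GG (t, y)))"
  by (simp only: curlM_alt pdG)
lemma curl_A: "curlM (A t) y = (\<Sum>l\<in>UNIV. Cc l (ddir (ev l) AA (t, y)))"
  by (simp only: curlM_alt pdA)

lemma divS: "(t, y) \<in> U \<Longrightarrow> divM (\<lambda>y. Smat (\<gamma> t y)) y = Psi0 (t, y)"
  by (simp add: divM_alt pdS Psi0_def)

lemma E1: "t \<in> {0..T} \<Longrightarrow> y \<in> \<Omega> \<Longrightarrow> (\<Sum>j\<in>UNIV. Dv j (ddir (ev j) AA (t, y))) = 0"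
  using eq1[of t y] by (simp only: divM_alt pdA)

lemma E2: "t \<in> {0..T} \<Longrightarrow> y \<in> \<Omega> \<Longrightarrow> ddir e0 AA (t, y) = - (\<Sum>l\<in>UNIV. Cc l (Smat (ddir (ev l) GG (t, y))))"
proof -
  assume t: "t \<in> {0..T}" and y: "y \<in> \<Omega>"
  have 1: "dt T A t y = ddir e0 AA (t, y)" using dtA[OF t y] .
  have 2: "curlM (\<lambda>y. Smat (\<gamma> t y)) y = (\<Sum>l\<in>UNIV. Cc l (Smat (ddir (ev l) GG (t, y))))"
    by (simp add: curlM_alt pdS inU[OF t y])
  show ?thesis using eq2[OF t y] unfolding 1 2 by (simp add: eq_neg_iff_add_eq_0)
qed

lemma E3: "t \<in> {0..T} \<Longrightarrow> y \<in> \<Omega> \<Longrightarrow> Smat (ddir e0 GG (t, y)) = symm (\<Sum>l\<in>UNIV. Cc l (ddir (ev l) AA (t, y)))"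
proof -
  assume t: "t \<in> {0..T}" and y: "y \<in> \<Omega>"
  have 1: "dt T \<gamma> t y = ddir e0 GG (t, y)" using dtG[OF t y] .
  show ?thesis using eq3[OF t y] unfolding 1 curl_A by simp
qed

lemma E4: "t \<in> {0..T} \<Longrightarrow> y \<in> \<Omega> \<Longrightarrow>
   (\<Sum>j\<in>UNIV. (\<Sum>m\<in>UNIV. Dv m (Smat (ddir (ev j) (ddir (ev m) GG) (t, y)))) $ j) = 0"
proof -
  assume t: "t \<in> {0..T}" and y: "y \<in> \<Omega>"
  have "pd j (divM (\<lambda>y. Smat (\<gamma> t y))) y = (\<Sum>m\<in>UNIV. Dv m (Smat (ddir (ev j) (ddir (ev m) GG) (t, y))))" for j
  proof (rule PDL(2)[OF y, of _ Psi0 t])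
    show "\<And>y'. y' \<in> \<Omega> \<Longrightarrow> divM (\<lambda>y. Smat (\<gamma> t y)) y' = Psi0 (t, y')" using divS inU[OF t] by blast
    show "hasDD (ev j) Psi0 (t, y) (\<Sum>m\<in>UNIV. Dv m (Smat (ddir (ev j) (ddir (ev m) GG) (t, y))))"
      unfolding Psi0_def[abs_def] by (intro hasDD_rules sp_has smooth_ddir sGG inU t y)
  qed
  then show ?thesis using eq4[OF t y] by (simp add: divdiv_def divv_def)
qed

lemma GS0: "t \<in> {0..T} \<Longrightarrow> y \<in> \<Omega> \<Longrightarrow> transpose (GG (t, y)) = GG (t, y)"
  using \<gamma>_sym by (simp add: symmetric_mat_def GG_def)
lemma GS1: assumes t: "t \<in> {0..T}" and y: "y \<in> \<Omega>"
  shows "transpose (ddir (ev l) GG (t, y)) = ddir (ev l) GG (t, y)"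
  using TS[OF sGG t GS0[OF t] y] .
lemma GS2: assumes t: "t \<in> {0..T}" and y: "y \<in> \<Omega>"
  shows "transpose (ddir (ev k) (ddir (ev l) GG) (t, y)) = ddir (ev k) (ddir (ev l) GG) (t, y)"
  using TS[OF smooth_ddir[OF sGG] t GS1[OF t] y] .
lemma GS3: assumes t: "t \<in> {0..T}" and y: "y \<in> \<Omega>"
  shows "transpose (ddir (ev k) (ddir (ev l) (ddir (ev m) GG)) (t, y)) = ddir (ev k) (ddir (ev l) (ddir (ev m) GG)) (t, y)"
  using TS[OF smooth_ddir[OF smooth_ddir[OF sGG]] t GS2[OF t] y] .

lemma cont_Psi0: "continuous_on U Psi0"
  unfolding Psi0_def[abs_def] by (intro continuous_on_sum cont_Dv cont_Smat smooth_cont smooth_ddir sGG)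

lemma hG1: "q \<in> U \<Longrightarrow> hasDD v GG q (ddir v GG q)" by (rule smooth_hasDD[OF sGG])
lemma hG2: "q \<in> U \<Longrightarrow> hasDD v (ddir u GG) q (ddir v (ddir u GG) q)" by (rule smooth_hasDD[OF smooth_ddir[OF sGG]])
lemma hG3: "q \<in> U \<Longrightarrow> hasDD v (ddir u (ddir w GG)) q (ddir v (ddir u (ddir w GG)) q)"
  by (rule smooth_hasDD[OF smooth_ddir[OF smooth_ddir[OF sGG]]])
lemma hA1: "q \<in> U \<Longrightarrow> hasDD v AA q (ddir v AA q)" by (rule smooth_hasDD[OF sAA])
lemma hA2: "q \<in> U \<Longrightarrow> hasDD v (ddir u AA) q (ddir v (ddir u AA) q)" by (rule smooth_hasDD[OF smooth_ddir[OF sAA]])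
lemma hA3: "q \<in> U \<Longrightarrow> hasDD v (ddir u (ddir w AA)) q (ddir v (ddir u (ddir w AA)) q)"
  by (rule smooth_hasDD[OF smooth_ddir[OF smooth_ddir[OF sAA]]])
lemmas hGA = hG1 hG2 hG3 hA1 hA2 hA3

lemma dt_beta:
  fixes \<beta> :: "real \<Rightarrow> vec3 \<Rightarrow> vec3" and A0 :: "vec3 \<Rightarrow> mat3"
  assumes \<beta>_def: "\<And>t x. \<beta> t x = (1/2) *\<^sub>R integral {0..t} (\<lambda>s. divM (\<lambda>y. Smat (\<gamma> s y)) x) + vskw (A0 x)"
    and t: "t \<in> {0..T}" and y: "y \<in> \<Omega>"
  shows "dt T \<beta> t y = (1/2) *\<^sub>R Psi0 (t, y)"
proof -
  define \<phi> where "\<phi> r = divM (\<lambda>y. Smat (\<gamma> r y)) y" for r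
  have \<phi>eq: "\<phi> r = Psi0 (r, y)" if "r \<in> {0..T}" for r using divS inU[OF that y] by (simp add: \<phi>_def)
  have "continuous_on {0..T} (\<lambda>r. Psi0 (r, y))"
  proof (rule continuous_on_compose2[OF cont_Psi0])
    show "continuous_on {0..T} (\<lambda>r. (r, y))" by (intro continuous_on_Pair continuous_on_id continuous_on_const)
    show "(\<lambda>r. (r, y)) ` {0..T} \<subseteq> U" using inU y by blast
  qed
  then have c: "continuous_on {0..T} \<phi>" using \<phi>eq continuous_on_eq by (metis (no_types, lifting))
  have "((\<lambda>s. (1/2) *\<^sub>R integral {0..s} \<phi> + vskw (A0 y)) has_vector_derivative (1/2) *\<^sub>R \<phi> t) (at t within {0..T})"
    unfolding has_vector_derivative_add_const by (intro vd_cmul integral_has_vector_derivative c t)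
  then have "((\<lambda>s. \<beta> s y) has_vector_derivative (1/2) *\<^sub>R \<phi> t) (at t within cbox 0 T)"
    by (simp add: \<beta>_def \<phi>_def[abs_def])
  then show ?thesis unfolding dt_def using vector_derivative_within_cbox[of 0 T t] Tpos t \<phi>eq[OF t] by simp
qed

end

context adm begin

lemma partA:
  fixes \<alpha> :: "real \<Rightarrow> vec3 \<Rightarrow> real" and \<beta> :: "real \<Rightarrow> vec3 \<Rightarrow> vec3" and A0 :: "vec3 \<Rightarrow> mat3"
  assumes \<alpha>_def: "\<And>t x. \<alpha> t x = (1/2) * trace (\<gamma> t x)"
    and \<beta>_def: "\<And>t x. \<beta> t x = (1/2) *\<^sub>R integral {0..t} (\<lambda>s. divM (\<lambda>y. Smat (\<gamma> s y)) x) + vskw (A0 x)"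
    and t: "t \<in> {0..T}" and x: "x \<in> \<Omega>"
  shows "dt T (dt T \<gamma>) t x + Smat (inc (\<gamma> t) x) - 2 *\<^sub>R hess (\<alpha> t) x - 2 *\<^sub>R defv (dt T \<beta> t) x = 0"
proof -
  define p where "p = (t, x)"
  define H where "H k l = ddir (ev k) (ddir (ev l) GG) p" for k l
  define G where "G = ddir e0 (ddir e0 GG) p"
  have pU: "p \<in> U" using inU[OF t x] by (simp add: p_def)
  have a1: "dt T (dt T \<gamma>) t x = G"
  proof -
    have 1: "((\<lambda>s. ddir e0 GG (s, x)) has_vector_derivative G) (at t)"
      using tm_has[OF smooth_ddir[OF sGG] pU[unfolded p_def]] by (simp add: G_def p_def)
    have 2: "((\<lambda>s. dt T \<gamma> s x) has_vector_derivative G) (at t within cbox 0 T)"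
    proof (rule has_vector_derivative_transform[OF _ _ has_vector_derivative_at_within[OF 1]])
      show "t \<in> cbox 0 T" using t by simp
      show "\<And>s. s \<in> cbox 0 T \<Longrightarrow> dt T \<gamma> s x = ddir e0 GG (s, x)"
        using dtG[OF _ x] by simp
    qed
    show ?thesis unfolding dt_def[of T "dt T \<gamma>"]
      using vector_derivative_within_cbox[OF _ _ 2] Tpos t by (simp add: dt_def)
  qed
  have a2: "Smat G = symm (\<Sum>k\<in>UNIV. Cc k (ddir (ev k) (ddir e0 AA) p))"
  proof -
    have "Smat (ddir e0 (ddir e0 GG) (t, x)) = symm (\<Sum>k\<in>UNIV. Cc k (ddir e0 (ddir (ev k) AA) (t, x)))"
    proof (rule TU[OF t, of "\<lambda>q. Smat (ddir e0 GG q)" x "\<lambda>q. symm (\<Sum>k\<in>UNIV. Cc k (ddir (ev k) AA q))"])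
      show "\<And>s. s \<in> {0..T} \<Longrightarrow> Smat (ddir e0 GG (s, x)) = symm (\<Sum>k\<in>UNIV. Cc k (ddir (ev k) AA (s, x)))"
        using E3 x by blast
      show "hasDD e0 (\<lambda>q. Smat (ddir e0 GG q)) (t, x) (Smat (ddir e0 (ddir e0 GG) (t, x)))"
        using pU unfolding p_def by (intro hasDD_rules hGA)
      show "hasDD e0 (\<lambda>q. symm (\<Sum>k\<in>UNIV. Cc k (ddir (ev k) AA q))) (t, x) (symm (\<Sum>k\<in>UNIV. Cc k (ddir e0 (ddir (ev k) AA) (t, x))))"
        using pU unfolding p_def by (intro hasDD_rules hGA)
    qed
    moreover have "ddir e0 (ddir (ev k) AA) (t, x) = ddir (ev k) (ddir e0 AA) (t, x)" for k
      using sw[OF sAA pU[unfolded p_def]] .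
    ultimately show ?thesis by (simp add: G_def p_def)
  qed
  have a4: "ddir (ev k) (ddir e0 AA) p = - (\<Sum>l\<in>UNIV. Cc l (Smat (H k l)))" for k
  proof (rule SU[OF x, of "ddir e0 AA" t "\<lambda>q. - (\<Sum>l\<in>UNIV. Cc l (Smat (ddir (ev l) GG q)))", folded p_def])
    show "\<And>y. y \<in> \<Omega> \<Longrightarrow> ddir e0 AA (t, y) = - (\<Sum>l\<in>UNIV. Cc l (Smat (ddir (ev l) GG (t, y))))"
      using E2 t by blast
    show "hasDD (ev k) (ddir e0 AA) p (ddir (ev k) (ddir e0 AA) p)"
      by (intro hGA pU)
    show "hasDD (ev k) (\<lambda>q. - (\<Sum>l\<in>UNIV. Cc l (Smat (ddir (ev l) GG q)))) p (- (\<Sum>l\<in>UNIV. Cc l (Smat (H k l))))"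
      unfolding H_def by (intro hasDD_rules hGA pU)
  qed
  have a5: "inc (\<gamma> t) x = (\<Sum>k\<in>UNIV. Cc k (transpose (\<Sum>l\<in>UNIV. Cc l (H k l))))"
  proof -
    have "pd k (\<lambda>y. transpose (curlM (\<gamma> t) y)) x = transpose (\<Sum>l\<in>UNIV. Cc l (H k l))" for k
    proof (rule PDL(2)[OF x, of _ "\<lambda>q. transpose (\<Sum>l\<in>UNIV. Cc l (ddir (ev l) GG q))" t])
      show "\<And>y. y \<in> \<Omega> \<Longrightarrow> transpose (curlM (\<gamma> t) y) = transpose (\<Sum>l\<in>UNIV. Cc l (ddir (ev l) GG (t, y)))"
        by (simp add: curl_\<gamma>)
      show "hasDD (ev k) (\<lambda>q. transpose (\<Sum>l\<in>UNIV. Cc l (ddir (ev l) GG q))) (t, x) (transpose (\<Sum>l\<in>UNIV. Cc l (H k l)))"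
        unfolding H_def p_def using pU[unfolded p_def] by (intro hasDD_rules hGA)
    qed
    then show ?thesis by (simp add: inc_def curlM_alt[of "\<lambda>y. transpose (curlM (\<gamma> t) y)"])
  qed
  have a6: "hess (\<alpha> t) x = (\<chi> i j. (1/2) * trace (H i j))"
  proof -
    have f1: "pd j (\<alpha> t) y = (1/2) * trace (ddir (ev j) GG (t, y))" if y: "y \<in> \<Omega>" for j y
    proof (rule PDL(2)[OF y, of _ "\<lambda>q. (1/2) * trace (GG q)" t])
      show "\<And>y. y \<in> \<Omega> \<Longrightarrow> \<alpha> t y = (1/2) * trace (GG (t, y))" by (simp add: \<alpha>_def GG_def)
      show "hasDD (ev j) (\<lambda>q. (1/2) * trace (GG q)) (t, y) ((1/2) * trace (ddir (ev j) GG (t, y)))"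
        using inU[OF t y] by (intro hasDD_rules hGA)
    qed
    have f2: "pd i (\<lambda>y. (1/2) * trace (ddir (ev j) GG (t, y))) x = (1/2) * trace (H i j)" for i j
    proof (rule PDL(2)[OF x, of _ "\<lambda>q. (1/2) * trace (ddir (ev j) GG q)" t])
      show "hasDD (ev i) (\<lambda>q. (1/2) * trace (ddir (ev j) GG q)) (t, x) ((1/2) * trace (H i j))"
        unfolding H_def p_def using pU[unfolded p_def] by (intro hasDD_rules hGA)
    qed simp
    have f3: "pd i (\<lambda>y. pd j (\<alpha> t) y) x = pd i (\<lambda>y. (1/2) * trace (ddir (ev j) GG (t, y))) x" for i j
      unfolding pd_ddir by (rule ddir_local[OF o\<Omega> x]) (use f1 in \<open>auto simp: pd_ddir\<close>)
    have e: "pd i (\<lambda>y. pd j (\<alpha> t) y) x = (1/2) * trace (H i j)" for i j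
      using f3[of i j] f2[of i j] by (rule trans)
    show ?thesis unfolding hess_def using e by (simp add: vec_eq_iff)
  qed
  have a7: "defv (dt T \<beta> t) x = symm (\<Sum>i\<in>UNIV. Gr i ((1/2) *\<^sub>R (\<Sum>j\<in>UNIV. Dv j (Smat (H i j)))))"
  proof -
    have "pd i (dt T \<beta> t) x = (1/2) *\<^sub>R (\<Sum>j\<in>UNIV. Dv j (Smat (H i j)))" for i
    proof (rule PDL(2)[OF x, of _ "\<lambda>q. (1/2) *\<^sub>R Psi0 q" t])
      show "\<And>y. y \<in> \<Omega> \<Longrightarrow> dt T \<beta> t y = (1/2) *\<^sub>R Psi0 (t, y)"
        using dt_beta[OF \<beta>_def t] by blast
      show "hasDD (ev i) (\<lambda>q. (1/2) *\<^sub>R Psi0 q) (t, x) ((1/2) *\<^sub>R (\<Sum>j\<in>UNIV. Dv j (Smat (H i j))))"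
        unfolding H_def p_def Psi0_def using pU[unfolded p_def] by (intro hasDD_rules hGA)
    qed
    then show ?thesis by (simp add: defv_def gradv_alt)
  qed
  have c: "(\<Sum>j\<in>UNIV. (\<Sum>m\<in>UNIV. Dv m (Smat (H j m))) $ j) = 0"
    using E4[OF t x] by (simp add: H_def p_def)
  have sy: "H k l = H l k" for k l unfolding H_def by (rule sw[OF sGG pU])
  have tr: "transpose (H k l) = H k l" for k l unfolding H_def p_def by (rule GS2[OF t x])
  have en: "H k l $ i $ j = H k l $ j $ i" for k l i j
  proof -
    have "transpose (H k l) $ j $ i = H k l $ i $ j" by (simp add: transpose_def)
    then show ?thesis using tr by simp
  qed
  have g: "Smat G = - symm (\<Sum>k\<in>UNIV. Cc k (\<Sum>l\<in>UNIV. Cc l (Smat (H k l))))"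
    unfolding a2 a4 by (simp add: alg_simps field_simps)
  show ?thesis unfolding a1 a5 a6 a7
    by (rule alg_a[OF sy sy sy en en en c g])
qed

end

context adm begin

definition "Psi1 i q = (\<Sum>j\<in>UNIV. Dv j (Smat (ddir (ev i) (ddir (ev j) GG) q)))"
definition "Psi2 k i q = (\<Sum>j\<in>UNIV. Dv j (Smat (ddir (ev k) (ddir (ev i) (ddir (ev j) GG)) q)))"

lemma cont_Psi1: "continuous_on U (Psi1 i)"
  unfolding Psi1_def[abs_def] by (intro continuous_on_sum cont_Dv cont_Smat smooth_cont smooth_ddir sGG)
lemma cont_Psi2: "continuous_on U (Psi2 k i)"
  unfolding Psi2_def[abs_def] by (intro continuous_on_sum cont_Dv cont_Smat smooth_cont smooth_ddir sGG)
lemma has_Psi0: "q \<in> U \<Longrightarrow> hasDD (ev i) Psi0 q (Psi1 i q)"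
  unfolding Psi0_def[abs_def] Psi1_def by (intro hasDD_rules hGA)
lemma has_Psi1: "q \<in> U \<Longrightarrow> hasDD (ev k) (Psi1 i) q (Psi2 k i q)"
  unfolding Psi1_def[abs_def] Psi2_def by (intro hasDD_rules hGA)

lemma leib:
  fixes F F' :: "real \<times> vec3 \<Rightarrow> 'c::euclidean_space"
  assumes cF: "continuous_on U F" and cF': "continuous_on U F'"
    and hF: "\<And>q. q \<in> U \<Longrightarrow> hasDD (ev k) F q (F' q)" and t: "t \<in> {0..T}" and x: "x \<in> \<Omega>"
  shows "hasDD (axis k 1) (\<lambda>y. integral {0..t} (\<lambda>s. F (s, y))) x (integral {0..t} (\<lambda>s. F' (s, x)))"
proof -
  obtain \<delta> where \<delta>: "\<delta> > 0" "ball x \<delta> \<subseteq> \<Omega>" using o\<Omega> x open_contains_ball by blast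
  define V where "V = ball (0::real) \<delta>"
  have inV: "(s, x + h *\<^sub>R axis k 1) \<in> U" if "h \<in> V" "s \<in> cbox 0 t" for h s
  proof -
    have "x + h *\<^sub>R axis k 1 \<in> ball x \<delta>" using that(1) by (simp add: V_def dist_norm)
    then have "x + h *\<^sub>R axis k 1 \<in> \<Omega>" using \<delta> by blast
    moreover have "s \<in> {0..T}" using that(2) t by auto
    ultimately show ?thesis using inU by blast
  qed
  have fx: "((\<lambda>h. F (s, x + h *\<^sub>R axis k 1)) has_vector_derivative F' (s, x + h *\<^sub>R axis k 1)) (at h within V)"
    if "h \<in> V" "s \<in> cbox 0 t" for h s
  proof -
    have "hasDD (ev k) F ((s, x) + h *\<^sub>R ev k) (F' (s, x + h *\<^sub>R axis k 1))"
      using hF[OF inV[OF that]] by (simp add: ev_def)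
    from hasDD_shift[OF this] have "((\<lambda>r. F (s, x + r *\<^sub>R axis k 1)) has_vector_derivative F' (s, x + h *\<^sub>R axis k 1)) (at h)"
      by (simp add: ev_def)
    then show ?thesis by (rule has_vector_derivative_at_within)
  qed
  have integ: "(\<lambda>s. F (s, x + h *\<^sub>R axis k 1)) integrable_on cbox 0 t" if "h \<in> V" for h
  proof -
    have "continuous_on {0..t} (\<lambda>s. F (s, x + h *\<^sub>R axis k 1))"
    proof (rule continuous_on_compose2[OF cF])
      show "continuous_on {0..t} (\<lambda>s. (s, x + h *\<^sub>R axis k 1))" by (intro continuous_on_Pair continuous_on_id continuous_on_const)
      show "(\<lambda>s. (s, x + h *\<^sub>R axis k 1)) ` {0..t} \<subseteq> U" using inV[OF that] by auto
    qed
    then show ?thesis by (simp add: integrable_continuous_interval)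
  qed
  have cfx: "continuous_on (V \<times> cbox 0 t) (\<lambda>(h, s). F' (s, x + h *\<^sub>R axis k 1))"
  proof -
    have "continuous_on (V \<times> cbox 0 t) (\<lambda>z. F' (snd z, x + fst z *\<^sub>R axis k 1))"
    proof (rule continuous_on_compose2[OF cF'])
      show "continuous_on (V \<times> cbox 0 t) (\<lambda>z. (snd z, x + fst z *\<^sub>R axis k 1))"
        by (intro continuous_intros)
      show "(\<lambda>z. (snd z, x + fst z *\<^sub>R axis k 1)) ` (V \<times> cbox 0 t) \<subseteq> U" using inV by auto
    qed
    then show ?thesis by (simp add: case_prod_beta')
  qed
  have V0: "0 \<in> V" using \<delta> by (simp add: V_def)
  have "((\<lambda>h. integral (cbox 0 t) (\<lambda>s. F (s, x + h *\<^sub>R axis k 1))) has_vector_derivative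
      integral (cbox 0 t) (\<lambda>s. F' (s, x + 0 *\<^sub>R axis k 1))) (at 0 within V)"
  proof (rule leibniz_rule_vector_derivative[of V 0 t "\<lambda>h s. F (s, x + h *\<^sub>R axis k 1)"
        "\<lambda>h s. F' (s, x + h *\<^sub>R axis k 1)" 0])
    show "convex V" by (simp add: V_def)
  qed (use fx integ cfx V0 in auto)
  then have "((\<lambda>h. integral {0..t} (\<lambda>s. F (s, x + h *\<^sub>R axis k 1))) has_vector_derivative
      integral {0..t} (\<lambda>s. F' (s, x))) (at 0)"
    using at_within_open[OF V0] by (simp add: V_def)
  then show ?thesis unfolding hasDD_def by simp
qed

lemma hi_lin: "(f has_integral y) S \<Longrightarrow> bounded_linear L \<Longrightarrow> ((\<lambda>x. L (f x)) has_integral L y) S"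
  by (drule has_integral_linear) (simp_all add: o_def)

lemma alg_fin:
  "(\<Sum>k\<in>UNIV. Dv k (Smat (G k - 2 *\<^sub>R symm (\<Sum>i\<in>UNIV. Gr i ((1/2) *\<^sub>R I k i + V k i)))))
   = (\<Sum>k\<in>UNIV. Dv k (Smat (G k))) - (\<Sum>k\<in>UNIV. Dv k (Smat (symm (\<Sum>i\<in>UNIV. Gr i (I k i)))))
     - (\<Sum>k\<in>UNIV. Dv k (Smat (2 *\<^sub>R symm (\<Sum>i\<in>UNIV. Gr i (V k i)))))"
  by (simp add: alg_simps field_simps)

definition "Mf q = (\<Sum>k\<in>UNIV. Dv k (symm (\<Sum>l\<in>UNIV. Cc l (ddir (ev k) (ddir (ev l) AA) q))))"
definition "Rf q = (\<Sum>k\<in>UNIV. Dv k (Smat (symm (\<Sum>i\<in>UNIV. Gr i (Psi2 k i q)))))"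

lemma Mf_deriv:
  assumes s: "s \<in> {0..T}" and x: "x \<in> \<Omega>"
  shows "hasDD e0 Mf (s, x) (Rf (s, x))"
proof -
  define q where "q = (s, x)"
  have qU: "q \<in> U" using inU[OF s x] by (simp add: q_def)
  define T3 where "T3 k l m = ddir (ev k) (ddir (ev l) (ddir (ev m) GG)) q" for k l m
  have h1: "hasDD e0 Mf q (\<Sum>k\<in>UNIV. Dv k (symm (\<Sum>l\<in>UNIV. Cc l (ddir e0 (ddir (ev k) (ddir (ev l) AA)) q))))"
    unfolding Mf_def[abs_def] by (intro hasDD_rules hGA qU)
  have st1: "ddir (ev l) (ddir e0 AA) (s, y) = - (\<Sum>m\<in>UNIV. Cc m (Smat (ddir (ev l) (ddir (ev m) GG) (s, y))))"
    if y: "y \<in> \<Omega>" for l y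
  proof (rule SU[OF y, of "ddir e0 AA" s "\<lambda>q. - (\<Sum>m\<in>UNIV. Cc m (Smat (ddir (ev m) GG q)))"])
    show "\<And>y. y \<in> \<Omega> \<Longrightarrow> ddir e0 AA (s, y) = - (\<Sum>m\<in>UNIV. Cc m (Smat (ddir (ev m) GG (s, y))))"
      using E2 s by blast
    show "hasDD (ev l) (ddir e0 AA) (s, y) (ddir (ev l) (ddir e0 AA) (s, y))"
      using inU[OF s y] by (intro hGA)
    show "hasDD (ev l) (\<lambda>q. - (\<Sum>m\<in>UNIV. Cc m (Smat (ddir (ev m) GG q)))) (s, y) (- (\<Sum>m\<in>UNIV. Cc m (Smat (ddir (ev l) (ddir (ev m) GG) (s, y)))))"
      using inU[OF s y] by (intro hasDD_rules hGA)
  qed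
  have st2: "ddir (ev k) (ddir (ev l) (ddir e0 AA)) q = - (\<Sum>m\<in>UNIV. Cc m (Smat (T3 k l m)))" for k l
  proof (rule SU[OF x, of "ddir (ev l) (ddir e0 AA)" s "\<lambda>q. - (\<Sum>m\<in>UNIV. Cc m (Smat (ddir (ev l) (ddir (ev m) GG) q)))", folded q_def])
    show "\<And>y. y \<in> \<Omega> \<Longrightarrow> ddir (ev l) (ddir e0 AA) (s, y) = - (\<Sum>m\<in>UNIV. Cc m (Smat (ddir (ev l) (ddir (ev m) GG) (s, y))))"
      by (rule st1)
    show "hasDD (ev k) (ddir (ev l) (ddir e0 AA)) q (ddir (ev k) (ddir (ev l) (ddir e0 AA)) q)"
      using qU by (intro hGA)
    show "hasDD (ev k) (\<lambda>q. - (\<Sum>m\<in>UNIV. Cc m (Smat (ddir (ev l) (ddir (ev m) GG) q)))) q (- (\<Sum>m\<in>UNIV. Cc m (Smat (T3 k l m))))"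
      unfolding T3_def using qU by (intro hasDD_rules hGA)
  qed
  have sw3: "ddir e0 (ddir (ev k) (ddir (ev l) AA)) q = ddir (ev k) (ddir (ev l) (ddir e0 AA)) q" for k l
    by (rule schwarz3[OF sAA qU])
  have p12: "T3 k l m = T3 l k m" for k l m unfolding T3_def by (rule sw[OF smooth_ddir[OF sGG] qU])
  have p23: "T3 k l m = T3 k m l" for k l m unfolding T3_def by (rule sw_inner[OF sGG qU])
  have trT: "transpose (T3 k l m) = T3 k l m" for k l m unfolding T3_def q_def by (rule GS3[OF s x])
  have en: "T3 k l m $ i $ j = T3 k l m $ j $ i" for k l m i j
  proof -
    have "transpose (T3 k l m) $ j $ i = T3 k l m $ i $ j" by (simp add: transpose_def)
    then show ?thesis using trT by simp
  qed
  have c: "(\<Sum>j\<in>UNIV. (\<Sum>m\<in>UNIV. Dv m (Smat (T3 k j m))) $ j) = 0" for k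
  proof (rule SU[OF x, of "\<lambda>q. (\<Sum>j\<in>UNIV. (\<Sum>m\<in>UNIV. Dv m (Smat (ddir (ev j) (ddir (ev m) GG) q))) $ j)" s "\<lambda>q. 0", folded q_def])
    show "\<And>y. y \<in> \<Omega> \<Longrightarrow> (\<Sum>j\<in>UNIV. (\<Sum>m\<in>UNIV. Dv m (Smat (ddir (ev j) (ddir (ev m) GG) (s, y)))) $ j) = 0"
      using E4 s by blast
    show "hasDD (ev k) (\<lambda>q. (\<Sum>j\<in>UNIV. (\<Sum>m\<in>UNIV. Dv m (Smat (ddir (ev j) (ddir (ev m) GG) q))) $ j)) q
       (\<Sum>j\<in>UNIV. (\<Sum>m\<in>UNIV. Dv m (Smat (T3 k j m))) $ j)"
      unfolding T3_def using qU by (intro hasDD_rules hGA)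
    show "hasDD (ev k) (\<lambda>q. 0) q 0" by (rule hasDD_const)
  qed
  have alg: "(\<Sum>k\<in>UNIV. Dv k (symm (\<Sum>l\<in>UNIV. Cc l (- (\<Sum>m\<in>UNIV. Cc m (Smat (T3 k l m)))))))
       = (\<Sum>k\<in>UNIV. Dv k (Smat (symm (\<Sum>i\<in>UNIV. Gr i (\<Sum>j\<in>UNIV. Dv j (Smat (T3 k i j)))))))"
    by (rule alg_c2[OF p12 p23 en en en c])
  have "(\<Sum>k\<in>UNIV. Dv k (symm (\<Sum>l\<in>UNIV. Cc l (ddir e0 (ddir (ev k) (ddir (ev l) AA)) q))))
     = (\<Sum>k\<in>UNIV. Dv k (symm (\<Sum>l\<in>UNIV. Cc l (- (\<Sum>m\<in>UNIV. Cc m (Smat (T3 k l m)))))))"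
    by (simp only: sw3 st2)
  also have "\<dots> = Rf q" unfolding alg by (simp only: Rf_def Psi2_def T3_def)
  finally show ?thesis using h1 by (simp add: q_def)
qed

lemma partB:
  fixes \<beta> :: "real \<Rightarrow> vec3 \<Rightarrow> vec3" and A0 :: "vec3 \<Rightarrow> mat3"
  assumes \<beta>_def: "\<And>t x. \<beta> t x = (1/2) *\<^sub>R integral {0..t} (\<lambda>s. divM (\<lambda>y. Smat (\<gamma> s y)) x) + vskw (A0 x)"
    and init_A: "\<And>x. x \<in> \<Omega> \<Longrightarrow> A 0 x = A0 x"
    and t: "t \<in> {0..T}" and x: "x \<in> \<Omega>"
  shows "divM (\<lambda>y. Smat (dt T \<gamma> t y - 2 *\<^sub>R defv (\<beta> t) y)) x = 0"
proof -
  define p where "p = (t, x)"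
  have pU: "p \<in> U" using inU[OF t x] by (simp add: p_def)
  define I where "I k i = integral {0..t} (\<lambda>s. Psi2 k i (s, x))" for k i
  define N where "N k i = ddir (ev k) (ddir (ev i) AA) (0, x)" for k i
  have tT: "{0..t} \<subseteq> {0..T}" using t by auto
  have bt: "\<beta> t y = (1/2) *\<^sub>R integral {0..t} (\<lambda>s. Psi0 (s, y)) + vskw (AA (0, y))" if y: "y \<in> \<Omega>" for y
  proof -
    have "integral {0..t} (\<lambda>s. divM (\<lambda>y. Smat (\<gamma> s y)) y) = integral {0..t} (\<lambda>s. Psi0 (s, y))"
      by (rule integral_cong) (use divS inU y tT in blast)
    moreover have "A0 y = AA (0, y)" using init_A[OF y] by (simp add: AA_def)
    ultimately show ?thesis by (simp add: \<beta>_def)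
  qed
  have pdb: "pd i (\<beta> t) y = (1/2) *\<^sub>R integral {0..t} (\<lambda>s. Psi1 i (s, y)) + vskw (ddir (ev i) AA (0, y))"
    if y: "y \<in> \<Omega>" for i y
  proof -
    have L: "hasDD (axis i 1) (\<lambda>y. integral {0..t} (\<lambda>s. Psi0 (s, y))) y (integral {0..t} (\<lambda>s. Psi1 i (s, y)))"
      by (rule leib[OF cont_Psi0 cont_Psi1 has_Psi0 t y])
    have L2: "hasDD (axis i 1) (\<lambda>y. AA (0, y)) y (ddir (ev i) AA (0, y))"
      by (rule sp_hasS) (rule hA1[OF inU0[OF y]])
    have "hasDD (axis i 1) (\<lambda>y. (1/2) *\<^sub>R integral {0..t} (\<lambda>s. Psi0 (s, y)) + vskw (AA (0, y))) y
        ((1/2) *\<^sub>R integral {0..t} (\<lambda>s. Psi1 i (s, y)) + vskw (ddir (ev i) AA (0, y)))"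
      by (intro hasDD_add hasDD_scale hasDD_vskw L L2)
    then have "hasDD (axis i 1) (\<beta> t) y ((1/2) *\<^sub>R integral {0..t} (\<lambda>s. Psi1 i (s, y)) + vskw (ddir (ev i) AA (0, y)))"
      by (rule hasDD_local[OF o\<Omega> y, rotated]) (use bt in auto)
    then show ?thesis by (simp add: pd_ddir hasDD_ddir)
  qed
  define B where "B k = symm (\<Sum>i\<in>UNIV. Gr i ((1/2) *\<^sub>R I k i + vskw (N k i)))" for k
  have hdefv: "hasDD (axis k 1) (defv (\<beta> t)) x (B k)" for k
  proof -
    have L: "hasDD (axis k 1) (\<lambda>y. integral {0..t} (\<lambda>s. Psi1 i (s, y))) x (I k i)" for i
      unfolding I_def by (rule leib[OF cont_Psi1 cont_Psi2 has_Psi1 t x])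
    have L2: "hasDD (axis k 1) (\<lambda>y. ddir (ev i) AA (0, y)) x (N k i)" for i
      unfolding N_def by (rule sp_hasS) (rule hA2[OF inU0[OF x]])
    have "hasDD (axis k 1) (\<lambda>y. symm (\<Sum>i\<in>UNIV. Gr i ((1/2) *\<^sub>R integral {0..t} (\<lambda>s. Psi1 i (s, y)) + vskw (ddir (ev i) AA (0, y))))) x (B k)"
      unfolding B_def by (intro hasDD_symm hasDD_sum hasDD_Gr hasDD_add hasDD_scale hasDD_vskw L L2)
    then show ?thesis
      by (rule hasDD_local[OF o\<Omega> x, rotated]) (simp add: defv_def gradv_alt pdb)
  qed
  have pdk: "pd k (\<lambda>y. Smat (dt T \<gamma> t y - 2 *\<^sub>R defv (\<beta> t) y)) x = Smat (ddir (ev k) (ddir e0 GG) p - 2 *\<^sub>R B k)" for k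
  proof -
    have h0: "hasDD (axis k 1) (\<lambda>y. ddir e0 GG (t, y)) x (ddir (ev k) (ddir e0 GG) p)"
      unfolding p_def by (rule sp_hasS) (rule hG2[OF pU[unfolded p_def]])
    have "hasDD (axis k 1) (\<lambda>y. Smat (ddir e0 GG (t, y) - 2 *\<^sub>R defv (\<beta> t) y)) x (Smat (ddir (ev k) (ddir e0 GG) p - 2 *\<^sub>R B k))"
      by (intro hasDD_Smat hasDD_diff hasDD_scale h0 hdefv)
    then have "hasDD (axis k 1) (\<lambda>y. Smat (dt T \<gamma> t y - 2 *\<^sub>R defv (\<beta> t) y)) x (Smat (ddir (ev k) (ddir e0 GG) p - 2 *\<^sub>R B k))"
      by (rule hasDD_local[OF o\<Omega> x, rotated]) (simp add: dtG[OF t])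
    then show ?thesis by (simp add: pd_ddir hasDD_ddir)
  qed
  have b6: "Smat (ddir (ev k) (ddir e0 GG) p) = symm (\<Sum>l\<in>UNIV. Cc l (ddir (ev k) (ddir (ev l) AA) p))" for k
  proof (rule SU[OF x, of "\<lambda>q. Smat (ddir e0 GG q)" t "\<lambda>q. symm (\<Sum>l\<in>UNIV. Cc l (ddir (ev l) AA q))", folded p_def])
    show "\<And>y. y \<in> \<Omega> \<Longrightarrow> Smat (ddir e0 GG (t, y)) = symm (\<Sum>l\<in>UNIV. Cc l (ddir (ev l) AA (t, y)))"
      using E3 t by blast
    show "hasDD (ev k) (\<lambda>q. Smat (ddir e0 GG q)) p (Smat (ddir (ev k) (ddir e0 GG) p))"
      using pU by (intro hasDD_rules hGA)
    show "hasDD (ev k) (\<lambda>q. symm (\<Sum>l\<in>UNIV. Cc l (ddir (ev l) AA q))) p (symm (\<Sum>l\<in>UNIV. Cc l (ddir (ev k) (ddir (ev l) AA) p)))"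
      using pU by (intro hasDD_rules hGA)
  qed
  have Mt: "(\<Sum>k\<in>UNIV. Dv k (Smat (ddir (ev k) (ddir e0 GG) p))) = Mf p"
    by (simp add: Mf_def b6)
  have ftc: "((\<lambda>s. Rf (s, x)) has_integral (Mf (t, x) - Mf (0, x))) {0..t}"
  proof (rule fundamental_theorem_of_calculus)
    show "0 \<le> t" using t by simp
    fix s assume s: "s \<in> {0..t}"
    then have sT: "s \<in> {0..T}" using tT by blast
    show "((\<lambda>s. Mf (s, x)) has_vector_derivative Rf (s, x)) (at s within {0..t})"
      by (rule has_vector_derivative_at_within[OF tm_hasD[OF Mf_deriv[OF sT x]]])
  qed
  have hI: "((\<lambda>s. Psi2 k i (s, x)) has_integral I k i) {0..t}" for k i
  proof -
    have "continuous_on {0..t} (\<lambda>s. Psi2 k i (s, x))"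
    proof (rule continuous_on_compose2[OF cont_Psi2])
      show "continuous_on {0..t} (\<lambda>s. (s, x))" by (intro continuous_on_Pair continuous_on_id continuous_on_const)
      show "(\<lambda>s. (s, x)) ` {0..t} \<subseteq> U" using inU x tT by blast
    qed
    then have "(\<lambda>s. Psi2 k i (s, x)) integrable_on {0..t}" by (rule integrable_continuous_interval)
    then show ?thesis unfolding I_def by (simp add: has_integral_integral)
  qed
  have blk: "bounded_linear (\<lambda>M. Dv k (Smat (symm M)))" for k
    by (intro bounded_linear_compose[OF bl_Dv] bounded_linear_compose[OF bl_Smat] bl_symm)
  have hR: "((\<lambda>s. Rf (s, x)) has_integral (\<Sum>k\<in>UNIV. Dv k (Smat (symm (\<Sum>i\<in>UNIV. Gr i (I k i)))))) {0..t}"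
    unfolding Rf_def
    by (intro has_integral_sum hi_lin[OF _ blk] hi_lin[OF _ bl_Gr] hI) simp_all
  have eqI: "Mf (t, x) - Mf (0, x) = (\<Sum>k\<in>UNIV. Dv k (Smat (symm (\<Sum>i\<in>UNIV. Gr i (I k i)))))"
    using has_integral_unique[OF ftc hR] .
  have Nsym: "N k i = N i k" for k i unfolding N_def by (rule sw[OF sAA inU0[OF x]])
  have Nc: "(\<Sum>j\<in>UNIV. Dv j (N k j)) = 0" for k
  proof (rule SU[OF x, of "\<lambda>q. (\<Sum>j\<in>UNIV. Dv j (ddir (ev j) AA q))" 0 "\<lambda>q. 0"])
    show "\<And>y. y \<in> \<Omega> \<Longrightarrow> (\<Sum>j\<in>UNIV. Dv j (ddir (ev j) AA (0, y))) = 0"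
      using E1 Tpos by simp
    show "hasDD (ev k) (\<lambda>q. \<Sum>j\<in>UNIV. Dv j (ddir (ev j) AA q)) (0, x) (\<Sum>j\<in>UNIV. Dv j (N k j))"
      unfolding N_def using inU0[OF x] by (intro hasDD_rules hGA)
    show "hasDD (ev k) (\<lambda>q. 0) (0, x) 0" by (rule hasDD_const)
  qed
  have M0: "Mf (0, x) = (\<Sum>k\<in>UNIV. Dv k (Smat (2 *\<^sub>R symm (\<Sum>i\<in>UNIV. Gr i (vskw (N k i))))))"
    unfolding Mf_def N_def[symmetric] by (rule alg_c1[OF Nsym Nsym Nsym Nc])
  have "divM (\<lambda>y. Smat (dt T \<gamma> t y - 2 *\<^sub>R defv (\<beta> t) y)) x
     = (\<Sum>k\<in>UNIV. Dv k (Smat (ddir (ev k) (ddir e0 GG) p - 2 *\<^sub>R B k)))"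
    by (simp add: divM_alt pdk)
  also have "\<dots> = Mf p - (Mf (t, x) - Mf (0, x)) - Mf (0, x)"
    unfolding B_def alg_fin Mt by (simp only: eqI[symmetric] M0[symmetric])
  also have "\<dots> = 0" by (simp add: p_def)
  finally show ?thesis .
qed

end

theorem theorem2p1:
  fixes \<Omega> :: "vec3 set" and T :: real
    and A \<gamma> :: "real \<Rightarrow> vec3 \<Rightarrow> mat3"
    and A0 \<gamma>0 :: "vec3 \<Rightarrow> mat3"
    and \<alpha> :: "real \<Rightarrow> vec3 \<Rightarrow> real" and \<beta> :: "real \<Rightarrow> vec3 \<Rightarrow> vec3"
  assumes "open \<Omega>" and "T > 0"
    and smooth: "\<exists>a b. a < 0 \<and> T < b \<and>
                   smooth_on ({a<..<b} \<times> \<Omega>) (\<lambda>(t, x). A t x) \<and>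
                   smooth_on ({a<..<b} \<times> \<Omega>) (\<lambda>(t, x). \<gamma> t x)"
    and A_tf: "\<And>t x. t \<in> {0..T} \<Longrightarrow> x \<in> \<Omega> \<Longrightarrow> tracefree_mat (A t x)"
    and \<gamma>_sym: "\<And>t x. t \<in> {0..T} \<Longrightarrow> x \<in> \<Omega> \<Longrightarrow> symmetric_mat (\<gamma> t x)"
    and eq1: "\<And>t x. t \<in> {0..T} \<Longrightarrow> x \<in> \<Omega> \<Longrightarrow> divM (A t) x = 0"
    and eq2: "\<And>t x. t \<in> {0..T} \<Longrightarrow> x \<in> \<Omega> \<Longrightarrow>
                dt T A t x + curlM (\<lambda>y. Smat (\<gamma> t y)) x = 0"
    and eq3: "\<And>t x. t \<in> {0..T} \<Longrightarrow> x \<in> \<Omega> \<Longrightarrow>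
                Smat (dt T \<gamma> t x) - symm (curlM (A t) x) = 0"
    and eq4: "\<And>t x. t \<in> {0..T} \<Longrightarrow> x \<in> \<Omega> \<Longrightarrow> divdiv (\<lambda>y. Smat (\<gamma> t y)) x = 0"
    and init_A: "\<And>x. x \<in> \<Omega> \<Longrightarrow> A 0 x = A0 x"
    and init_\<gamma>: "\<And>x. x \<in> \<Omega> \<Longrightarrow> \<gamma> 0 x = \<gamma>0 x"
    and \<alpha>_def: "\<And>t x. \<alpha> t x = (1/2) * trace (\<gamma> t x)"
    and \<beta>_def: "\<And>t x. \<beta> t x =
                 (1/2) *\<^sub>R integral {0..t} (\<lambda>s. divM (\<lambda>y. Smat (\<gamma> s y)) x) + vskw (A0 x)"
  shows "\<forall>t\<in>{0..T}. \<forall>x\<in>\<Omega>.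
           dt T (dt T \<gamma>) t x + Smat (inc (\<gamma> t) x) - 2 *\<^sub>R hess (\<alpha> t) x
             - 2 *\<^sub>R defv (dt T \<beta> t) x = 0
         \<and> divM (\<lambda>y. Smat (dt T \<gamma> t y - 2 *\<^sub>R defv (\<beta> t) y)) x = 0
         \<and> divdiv (\<lambda>y. Smat (\<gamma> t y)) x = 0"
  proof -
  obtain a b where ab: "a < 0" "T < b"
      "smooth_on ({a<..<b} \<times> \<Omega>) (\<lambda>(t, x). A t x)"
      "smooth_on ({a<..<b} \<times> \<Omega>) (\<lambda>(t, x). \<gamma> t x)"
    using smooth by blast
  interpret adm \<Omega> T a b A \<gamma>
    apply unfold_locales
    using assms ab by auto
  show ?thesis
    using partA[OF \<alpha>_def \<beta>_def] partB[OF \<beta>_def init_A] eq4 by blast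
qed

end
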